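(* Let $A$ be a real $m\times n$ matrix of rank $\rho\ge1$ with columns $A_1,\ldots,A_n$, let $\mu>0$, and let $\pi:[n]\to[n]$ be a permutation such that $A_{\pi(1)},\ldots,A_{\pi(\rho)}$ are linearly independent. For $k\in\{0,\ldots,\rho\}$ let $W_k$ be the orthogonal projection onto $\mathrm{span}\{A_{\pi(1)},\ldots,A_{\pi(k)}\}$ ($W_0=0$), $W_k^\perp=I-W_k$, and define the orthonormal vectors $Q_k=W_{k-1}^\perp(A_{\pi(k)})/\|W_{k-1}^\perp(A_{\pi(k)})\|$, $k\in[\rho]$. Suppose $s\in[\rho]$ satisfies $\|W_s^\perp(A_i)\|<\mu$ for all $i\in[n]$. Let $Q_{[s]}$ be the $m\times s$ matrix with columns $Q_1,\ldots,Q_s$ and define $F_s:\mathbb R^m\to\mathbb R^s$ by $F_s(v)=(Q_{[s]})^*v$. Then $F_s$ is an $s$-dimensional $2\mu$-distortion of the set of columns of $A$, i.e. $$\sup_{i,j\in[n]}\Big|\,\|A_i-A_j\|-\|F_s(A_i)-F_s(A_j)\|\,\Big|\le 2\mu.$$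
   Context: Norms are Euclidean; $[k]=\{1,\ldots,k\}$; $^*$ denotes transpose. *)

theory Defs
  imports "HOL-Analysis.Analysis"
begin

definition orth_proj :: "'a::euclidean_space set \<Rightarrow> 'a \<Rightarrow> 'a" where
  "orth_proj S v = (THE w. w \<in> span S \<and> (\<forall>u\<in>S. orthogonal (v - w) u))"

definition W :: "(nat \<Rightarrow> 'a::euclidean_space) \<Rightarrow> (nat \<Rightarrow> nat) \<Rightarrow> nat \<Rightarrow> 'a \<Rightarrow> 'a" where
  "W A \<pi> k v = orth_proj ((\<lambda>j. A (\<pi> j)) ` {1..k}) v"

definition W_perp :: "(nat \<Rightarrow> 'a::euclidean_space) \<Rightarrow> (nat \<Rightarrow> nat) \<Rightarrow> nat \<Rightarrow> 'a \<Rightarrow> 'a" where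
  "W_perp A \<pi> k v = v - W A \<pi> k v"

definition Q :: "(nat \<Rightarrow> 'a::euclidean_space) \<Rightarrow> (nat \<Rightarrow> nat) \<Rightarrow> nat \<Rightarrow> 'a" where
  "Q A \<pi> k = W_perp A \<pi> (k - 1) (A (\<pi> k)) /\<^sub>R norm (W_perp A \<pi> (k - 1) (A (\<pi> k)))"

text \<open>F_s(v) = (Q_[s])^* v, as a vector in R^s indexed by {1..s}.\<close>
definition F :: "(nat \<Rightarrow> 'a::euclidean_space) \<Rightarrow> (nat \<Rightarrow> nat) \<Rightarrow> nat \<Rightarrow> 'a \<Rightarrow> nat \<Rightarrow> real" where
  "F A \<pi> s v = (\<lambda>k. Q A \<pi> k \<bullet> v)"

definition normR :: "nat \<Rightarrow> (nat \<Rightarrow> real) \<Rightarrow> real" where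
  "normR s x = L2_set x {1..s}"

end

theory Submission
  imports Defs
begin

lemma orth_proj_prop:
  fixes S :: "'a::euclidean_space set"
  shows "orth_proj S v \<in> span S \<and> (\<forall>u\<in>span S. orthogonal (v - orth_proj S v) u)"
proof -
  obtain y z where y: "y \<in> span S" and z: "\<And>w. w \<in> span S \<Longrightarrow> orthogonal z w" and v: "v = y + z"
    using orthogonal_subspace_decomp_exists[of S v] by metis
  have ex: "\<exists>!w. w \<in> span S \<and> (\<forall>u\<in>S. orthogonal (v - w) u)"
  proof (rule ex1I[of _ y])
    show "y \<in> span S \<and> (\<forall>u\<in>S. orthogonal (v - y) u)"
      using y z v by (simp add: span_base)
  next
    fix w assume w: "w \<in> span S \<and> (\<forall>u\<in>S. orthogonal (v - w) u)"
    have d: "w - y \<in> span S" using w y by (simp add: span_diff)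
    have "orthogonal (w - y) u" if "u \<in> S" for u
    proof -
      have "orthogonal (v - y) u" using z[of u] v that by (simp add: span_base)
      moreover have "orthogonal (v - w) u" using w that by blast
      ultimately show ?thesis unfolding orthogonal_def by (simp add: inner_diff_left)
    qed
    then have "orthogonal (w - y) (w - y)" using d orthogonal_to_span by blast
    then show "w = y" by (simp add: orthogonal_def)
  qed
  have p: "orth_proj S v \<in> span S \<and> (\<forall>u\<in>S. orthogonal (v - orth_proj S v) u)"
    unfolding orth_proj_def by (rule theI'[OF ex])
  then show ?thesis using orthogonal_to_span by blast
qed

lemma orthonormal_expand:
  fixes q :: "nat \<Rightarrow> 'a::euclidean_space"
  assumes fin: "finite I" and n1: "\<And>i. i \<in> I \<Longrightarrow> norm (q i) = 1"
    and orth: "\<And>i j. i \<in> I \<Longrightarrow> j \<in> I \<Longrightarrow> i \<noteq> j \<Longrightarrow> q i \<bullet> q j = 0"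
    and x: "x \<in> span (q ` I)"
  shows "x \<bullet> x = (\<Sum>i\<in>I. (q i \<bullet> x)\<^sup>2)"
proof -
  define y where "y = x - (\<Sum>i\<in>I. (q i \<bullet> x) *\<^sub>R q i)"
  have qq: "q j \<bullet> q i = (if i = j then 1 else 0)" if "i \<in> I" "j \<in> I" for i j
    using n1 orth that by (auto simp: norm_eq_1)
  have yo: "orthogonal y u" if uq: "u \<in> q ` I" for u
  proof -
    obtain j where j: "j \<in> I" "u = q j" using uq by blast
    have "q j \<bullet> (\<Sum>i\<in>I. (q i \<bullet> x) *\<^sub>R q i) = (\<Sum>i\<in>I. (q i \<bullet> x) * (q j \<bullet> q i))"
      by (simp add: inner_sum_right)
    also have "\<dots> = (\<Sum>i\<in>I. if i = j then q i \<bullet> x else 0)"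
      by (rule sum.cong) (auto simp: qq j)
    also have "\<dots> = q j \<bullet> x" using fin j by simp
    finally show ?thesis unfolding y_def orthogonal_def j
      by (simp add: inner_diff_right inner_commute)
  qed
  have ys: "y \<in> span (q ` I)" unfolding y_def
    by (intro span_diff x span_sum span_scale span_base) auto
  have "orthogonal y y" using orthogonal_to_span[OF ys yo] .
  then have "y = 0" by (simp add: orthogonal_def)
  then have xe: "x = (\<Sum>i\<in>I. (q i \<bullet> x) *\<^sub>R q i)" unfolding y_def by simp
  have "x \<bullet> x = x \<bullet> (\<Sum>i\<in>I. (q i \<bullet> x) *\<^sub>R q i)" using xe by metis
  also have "\<dots> = (\<Sum>i\<in>I. (q i \<bullet> x)\<^sup>2)"
    by (simp add: inner_sum_right power2_eq_square inner_commute)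
  finally show ?thesis .
qed

theorem proposition1:
  fixes A :: "nat \<Rightarrow> real ^ 'm" and n \<rho> s :: nat and \<mu> :: real and \<pi> :: "nat \<Rightarrow> nat"
  assumes rank: "dim (A ` {1..n}) = \<rho>" and rho_pos: "\<rho> \<ge> 1"
    and mu_pos: "\<mu> > 0"
    and perm: "\<pi> permutes {1..n}"
    and indep: "independent ((\<lambda>k. A (\<pi> k)) ` {1..\<rho>})"
    and inj: "inj_on (\<lambda>k. A (\<pi> k)) {1..\<rho>}"
    and s: "s \<in> {1..\<rho>}"
    and small: "\<forall>i\<in>{1..n}. norm (W_perp A \<pi> s (A i)) < \<mu>"
  shows "(SUP ij\<in>{1..n} \<times> {1..n}.
           \<bar>norm (A (fst ij) - A (snd ij))
            - normR s (\<lambda>k. F A \<pi> s (A (fst ij)) k - F A \<pi> s (A (snd ij)) k)\<bar>) \<le> 2 * \<mu>"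
proof -
  define B where "B k = A (\<pi> k)" for k
  define S where "S k = B ` {1..k}" for k
  define P where "P k v = orth_proj (S k) v" for k v
  have Wk: "W A \<pi> k v = P k v" for k v unfolding W_def P_def S_def B_def by simp
  have Pspan: "P k v \<in> span (S k)" for k v unfolding P_def using orth_proj_prop by blast
  have Porth: "u \<in> span (S k) \<Longrightarrow> (v - P k v) \<bullet> u = 0" for k v u
    unfolding P_def using orth_proj_prop orthogonal_def by blast
  have Smono: "j \<le> k \<Longrightarrow> span (S j) \<subseteq> span (S k)" for j k
    by (rule span_mono) (auto simp: S_def)
  define u where "u k = B k - P (k - 1) (B k)" for k
  have Qk: "Q A \<pi> k = u k /\<^sub>R norm (u k)" for k
    unfolding Q_def W_perp_def Wk u_def B_def by simp
  have unz: "u k \<noteq> 0" if k: "1 \<le> k" "k \<le> \<rho>" for k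
  proof
    assume "u k = 0"
    then have "B k \<in> span (S (k - 1))" using Pspan[of "k-1" "B k"] unfolding u_def by simp
    moreover have "S (k - 1) \<subseteq> S \<rho> - {B k}"
    proof
      fix x assume "x \<in> S (k - 1)"
      then obtain j where j: "j \<in> {1..k-1}" "x = B j" unfolding S_def by blast
      have jk: "j \<noteq> k" "j \<in> {1..\<rho>}" "k \<in> {1..\<rho>}" using j k by auto
      have "B j \<noteq> B k" using inj_onD[OF inj _ jk(2,3)] jk(1) unfolding B_def by blast
      then show "x \<in> S \<rho> - {B k}" using j k unfolding S_def by auto
    qed
    ultimately have "B k \<in> span (S \<rho> - {B k})" using span_mono by blast
    moreover have "B k \<in> S \<rho>" using k unfolding S_def by auto
    ultimately have "dependent (S \<rho>)" unfolding dependent_def by blast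
    then show False using indep unfolding S_def B_def by simp
  qed
  have uspan: "u k \<in> span (S k)" if "1 \<le> k" for k
  proof -
    have "B k \<in> span (S k)" using that by (auto simp: S_def intro: span_base)
    moreover have "P (k - 1) (B k) \<in> span (S k)" using Pspan Smono[of "k-1" k] by auto
    ultimately show ?thesis unfolding u_def by (rule span_diff)
  qed
  have Qspan: "Q A \<pi> k \<in> span (S k)" if "1 \<le> k" for k
    unfolding Qk using uspan[OF that] by (simp add: span_scale)
  have Qnorm: "norm (Q A \<pi> k) = 1" if "1 \<le> k" "k \<le> \<rho>" for k
    unfolding Qk using unz[OF that] by simp
  have uorth: "u k \<bullet> w = 0" if "w \<in> span (S (k - 1))" for k w
    unfolding u_def using Porth[OF that] .
  have Qorth: "Q A \<pi> i \<bullet> Q A \<pi> j = 0" if "i \<in> {1..s}" "j \<in> {1..s}" "i \<noteq> j" for i j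
  proof -
    have *: "Q A \<pi> a \<bullet> Q A \<pi> b = 0" if "1 \<le> a" "a < b" for a b
    proof -
      have "Q A \<pi> a \<in> span (S (b - 1))" proof -
        have "a \<le> b - 1" using that by simp
        then show ?thesis using Qspan[OF that(1)] Smono[of a "b-1"] by blast
      qed
      then have "u b \<bullet> Q A \<pi> a = 0" by (rule uorth)
      then show ?thesis unfolding Qk[of b] by (simp add: inner_commute)
    qed
    show ?thesis
    proof (cases "i < j")
      case True then show ?thesis using * that by auto
    next
      case False then have "j < i" using that by auto
      then show ?thesis using *[of j i] that by (auto simp: inner_commute)
    qed
  qed
  have Bspan: "k \<le> \<rho> \<Longrightarrow> 1 \<le> k \<Longrightarrow> B k \<in> span (Q A \<pi> ` {1..k})" for k
  proof (induction k rule: less_induct)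
    case (less k)
    have "S (k - 1) \<subseteq> span (Q A \<pi> ` {1..k})"
    proof
      fix x assume "x \<in> S (k - 1)"
      then obtain j where j: "j \<in> {1..k-1}" "x = B j" unfolding S_def by blast
      then have "B j \<in> span (Q A \<pi> ` {1..j})" using less by auto
      moreover have "span (Q A \<pi> ` {1..j}) \<subseteq> span (Q A \<pi> ` {1..k})"
        using j by (intro span_mono) auto
      ultimately show "x \<in> span (Q A \<pi> ` {1..k})" using j by auto
    qed
    then have "span (S (k - 1)) \<subseteq> span (Q A \<pi> ` {1..k})"
      by (simp add: span_minimal)
    then have p: "P (k - 1) (B k) \<in> span (Q A \<pi> ` {1..k})" using Pspan by blast
    have "Q A \<pi> k \<in> span (Q A \<pi> ` {1..k})" using less by (auto intro: span_base)
    then have q: "norm (u k) *\<^sub>R Q A \<pi> k \<in> span (Q A \<pi> ` {1..k})" by (rule span_scale)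
    have "norm (u k) *\<^sub>R Q A \<pi> k = u k" unfolding Qk using unz[of k] less by simp
    then have "B k = norm (u k) *\<^sub>R Q A \<pi> k + P (k - 1) (B k)" unfolding u_def by simp
    then show ?case using span_add[OF q p] by simp
  qed
  have SsQ: "span (S s) \<subseteq> span (Q A \<pi> ` {1..s})"
  proof (intro span_minimal subspace_span subsetI)
    fix x assume "x \<in> S s"
    then obtain k where k: "k \<in> {1..s}" "x = B k" unfolding S_def by blast
    then have "B k \<in> span (Q A \<pi> ` {1..k})" using Bspan s by auto
    moreover have "span (Q A \<pi> ` {1..k}) \<subseteq> span (Q A \<pi> ` {1..s})"
      using k by (intro span_mono) auto
    ultimately show "x \<in> span (Q A \<pi> ` {1..s})" using k by auto
  qed
  have key: "\<bar>norm (A i - A j) - normR s (\<lambda>k. F A \<pi> s (A i) k - F A \<pi> s (A j) k)\<bar> \<le> 2 * \<mu>"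
    if ij: "i \<in> {1..n}" "j \<in> {1..n}" for i j
  proof -
    define d where "d = A i - A j"
    define x where "x = P s (A i) - P s (A j)"
    have xs: "x \<in> span (S s)" unfolding x_def using Pspan by (simp add: span_diff)
    have dx: "d - x = W_perp A \<pi> s (A i) - W_perp A \<pi> s (A j)"
      unfolding d_def x_def W_perp_def Wk by simp
    have Qd: "Q A \<pi> k \<bullet> d = Q A \<pi> k \<bullet> x" if "k \<in> {1..s}" for k
    proof -
      have qs: "Q A \<pi> k \<in> span (S s)" using Qspan[of k] Smono[of k s] that by auto
      have "(A i - P s (A i)) \<bullet> Q A \<pi> k = 0" "(A j - P s (A j)) \<bullet> Q A \<pi> k = 0"
        using Porth[OF qs] by auto
      then have "(d - x) \<bullet> Q A \<pi> k = 0" unfolding d_def x_def by (simp add: algebra_simps)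
      then show ?thesis by (simp add: inner_diff_left inner_commute)
    qed
    have "normR s (\<lambda>k. F A \<pi> s (A i) k - F A \<pi> s (A j) k) = sqrt (\<Sum>k\<in>{1..s}. (Q A \<pi> k \<bullet> x)\<^sup>2)"
      unfolding normR_def F_def L2_set_def using Qd
      by (simp add: d_def inner_diff_right)
    also have "(\<Sum>k\<in>{1..s}. (Q A \<pi> k \<bullet> x)\<^sup>2) = x \<bullet> x"
      using s by (intro orthonormal_expand[symmetric] Qnorm Qorth) (use xs SsQ in auto)
    also have "sqrt (x \<bullet> x) = norm x" by (simp add: norm_eq_sqrt_inner)
    finally have nr: "normR s (\<lambda>k. F A \<pi> s (A i) k - F A \<pi> s (A j) k) = norm x" .
    have "\<bar>norm d - norm x\<bar> \<le> norm (d - x)" by (rule norm_triangle_ineq3)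
    also have "\<dots> \<le> norm (W_perp A \<pi> s (A i)) + norm (W_perp A \<pi> s (A j))"
      unfolding dx by (rule norm_triangle_ineq4)
    also have "\<dots> \<le> 2 * \<mu>" using bspec[OF small ij(1)] bspec[OF small ij(2)] by linarith
    finally show ?thesis unfolding nr d_def .
  qed
  have ne: "{1..n} \<noteq> {}"
  proof
    assume "{1..n} = {}" then have "A ` {1..n} = {}" by simp
    then have "dim (A ` {1..n}) = 0" by (simp only: dim_empty)
    then show False using rank rho_pos by linarith
  qed
  show ?thesis
    by (rule cSUP_least) (use ne key in auto)
qed

end
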